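(* Let $M$ be a connected Riemannian manifold, and let the Newtonian dynamical system admitting the normal shift, with data $a,\mathbf b$, be as in the context, with $\Vert\mathbf b\Vert<\infty$ for some $f$ as in the context. Let $W$ be the smooth function on $\widehat M\times\mathbb R^+$ described in the context, and let $\widetilde W=a\cdot W_v$ where $W_v=\partial W/\partial v$. If the level hypersurfaces of $W$ are connected, then for any $(p_0,v_0),(p_1,v_1)\in\widehat M\times\mathbb R^+$ with $W(p_0,v_0)=W(p_1,v_1)$ one has $\widetilde W(p_0,v_0)=\widetilde W(p_1,v_1)$.
   Context: $M$ is a Riemannian manifold with metric $g$; a Newtonian dynamical system on $M$ is given in local coordinates by $\ddot x^k+\sum_{i,j}\Gamma^k_{ij}\dot x^i\dot x^j=F^k(x,\dot x)$ with $\Gamma$ the Levi-Civita connection. Write $v=|\dot x|$, $N^i=\dot x^i/v$, $N_k=\sum_i g_{ki}N^i$. The system admits the normal shift of hypersurfaces if for every hypersurface $S$, every $p_0\in S$ and $\nu_0>0$ there are a neighborhood $S'$ of $p_0$ in $S$ and a smooth positive $\nu$ on $S'$ with $\nu(p_0)=\nu_0$ such that shifting points $p\in S'$ along trajectories with initial velocity $\nu(p)\mathbf n(p)$ ($\mathbf n$ unit normal) produces hypersurfaces orthogonal to the trajectories. For such systems $F_k=a\,N_k+v\sum_i b_i(2N^iN_k-\delta^i_k)$ with smooth $a(p,v)$, $b_i(p,v)$ on $M\times\mathbb R^+$ ($\mathbf b(p,v)\in T^*_pM$) satisfying $\left(\partial_j+b_j\partial_v\right)b_i=\left(\partial_i+b_i\partial_v\right)b_j$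 and $\left(\partial_i+b_i\partial_v\right)a=(\partial_v b_i)a$ in local coordinates $x^1,\dots,x^n,v$; $a,\mathbf b$ are lifted to $\widehat M\times\mathbb R^+$, $\widehat M$ the universal cover. $f:\mathbb R^+\to\mathbb R^+$ is positive with $\int_{v_0}^v dv/f\to+\infty$ as $v\to+\infty$ and $\to-\infty$ as $v\to0$; the $f$-norm is $\Vert\mathbf b\Vert=\sup_{p,v}|\mathbf b|/f(v)$, $|\mathbf b|^2=\sum g^{ij}b_ib_j$. The function $W$: fix $p_0\in\widehat M$; for $w>0$ let $V(p,w)$ be the global solution on $\widehat M$ of the Pfaff system $\partial V/\partial x^i=b_i(x,V)$ with $V(p_0,w)=w$; $W(p,v)$ is defined by $V(p,W(p,v))=v$ (i.e. $W(V(p,w))=w$). It is smooth, satisfies $W_v\neq0$ and $b_i=-(\partial W/\partial x^i)/W_v$. *)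

theory Defs
  imports "HOL-Analysis.Analysis"
begin

fun Ck_on :: "nat \<Rightarrow> 'a::euclidean_space set \<Rightarrow> ('a \<Rightarrow> 'b::real_normed_vector) \<Rightarrow> bool" where
  "Ck_on 0 S f = continuous_on S f"
| "Ck_on (Suc k) S f = (f differentiable_on S \<and> continuous_on S f \<and>
      (\<forall>i\<in>Basis. Ck_on k S (\<lambda>x. frechet_derivative f (at x) i)))"

definition smooth_on :: "'a::euclidean_space set \<Rightarrow> ('a \<Rightarrow> 'b::real_normed_vector) \<Rightarrow> bool" where
  "smooth_on S f \<longleftrightarrow> (\<forall>k. Ck_on k S f)"

type_synonym ('m,'n) chart = "'m set \<times> ('m \<Rightarrow> real^'n)"

definition chart_dom :: "('m,'n) chart \<Rightarrow> 'm set" where "chart_dom c = fst c"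
definition chart_map :: "('m,'n) chart \<Rightarrow> 'm \<Rightarrow> real^'n" where "chart_map c = snd c"
definition chart_img :: "('m,'n) chart \<Rightarrow> (real^'n) set" where
  "chart_img c = chart_map c ` chart_dom c"
definition chart_inv :: "('m,'n) chart \<Rightarrow> real^'n \<Rightarrow> 'm" where
  "chart_inv c = inv_into (chart_dom c) (chart_map c)"

definition transition :: "('m,'n) chart \<Rightarrow> ('m,'n) chart \<Rightarrow> real^'n \<Rightarrow> real^'n" where
  "transition c d = chart_map d \<circ> chart_inv c"

definition smooth_atlas :: "('m::topological_space,'n::finite) chart set \<Rightarrow> bool" where
  "smooth_atlas A \<longleftrightarrow>
     (\<forall>c\<in>A. open (chart_dom c) \<and> open (chart_img c) \<and>
        homeomorphism (chart_dom c) (chart_img c) (chart_map c) (chart_inv c)) \<and>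
     (\<Union>c\<in>A. chart_dom c) = UNIV \<and>
     (\<forall>c\<in>A. \<forall>d\<in>A. smooth_on (chart_map c ` (chart_dom c \<inter> chart_dom d)) (transition c d))"

definition cdom :: "('m,'n::finite) chart \<Rightarrow> ((real^'n) \<times> real) set" where
  "cdom c = chart_img c \<times> {0<..}"

definition loc :: "('m,'n) chart \<Rightarrow> ('m \<Rightarrow> real \<Rightarrow> 'b) \<Rightarrow> (real^'n) \<times> real \<Rightarrow> 'b" where
  "loc c F = (\<lambda>(x,v). F (chart_inv c x) v)"

definition smooth_fun :: "('m,'n::finite) chart set \<Rightarrow> ('m \<Rightarrow> real \<Rightarrow> real) \<Rightarrow> bool" where
  "smooth_fun A F \<longleftrightarrow> (\<forall>c\<in>A. smooth_on (cdom c) (loc c F))"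

definition pdx :: "'n \<Rightarrow> ((real^'n) \<times> real \<Rightarrow> real) \<Rightarrow> (real^'n) \<times> real \<Rightarrow> real" where
  "pdx i F z = frechet_derivative F (at z) (axis i 1, 0)"
definition pdv :: "((real^'n) \<times> real \<Rightarrow> real) \<Rightarrow> (real^'n) \<times> real \<Rightarrow> real" where
  "pdv F z = frechet_derivative F (at z) (0, 1)"

text \<open>bc c x v is the vector of components (b_1,...,b_n) in chart c at coordinates x, speed v.
  Compatibility: b^c(u) = b^d(D(transition c d) u) on overlaps.\<close>
definition covector_field :: "('m::topological_space,'n::finite) chart set
    \<Rightarrow> (('m,'n) chart \<Rightarrow> real^'n \<Rightarrow> real \<Rightarrow> real^'n) \<Rightarrow> bool" where
  "covector_field A bc \<longleftrightarrow>
     (\<forall>c\<in>A. smooth_on (cdom c) (\<lambda>(x,v). bc c x v)) \<and>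
     (\<forall>c\<in>A. \<forall>d\<in>A. \<forall>p\<in>chart_dom c \<inter> chart_dom d. \<forall>v>0. \<forall>u.
        bc c (chart_map c p) v \<bullet> u =
        bc d (chart_map d p) v \<bullet> frechet_derivative (transition c d) (at (chart_map c p)) u)"

definition bcomp :: "(('m,'n) chart \<Rightarrow> real^'n \<Rightarrow> real \<Rightarrow> real^'n) \<Rightarrow> ('m,'n) chart
    \<Rightarrow> 'n \<Rightarrow> (real^'n) \<times> real \<Rightarrow> real" where
  "bcomp bc c i = (\<lambda>(x,v). bc c x v $ i)"

definition riemannian_metric :: "('m::topological_space,'n::finite) chart set
    \<Rightarrow> (('m,'n) chart \<Rightarrow> real^'n \<Rightarrow> real^'n^'n) \<Rightarrow> bool" where
  "riemannian_metric A gc \<longleftrightarrow>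
     (\<forall>c\<in>A. smooth_on (chart_img c) (gc c) \<and>
        (\<forall>x\<in>chart_img c. transpose (gc c x) = gc c x \<and>
           (\<forall>u. u \<noteq> 0 \<longrightarrow> u \<bullet> (gc c x *v u) > 0))) \<and>
     (\<forall>c\<in>A. \<forall>d\<in>A. \<forall>p\<in>chart_dom c \<inter> chart_dom d. \<forall>u w.
        let J = frechet_derivative (transition c d) (at (chart_map c p)) in
        u \<bullet> (gc c (chart_map c p) *v w) = J u \<bullet> (gc d (chart_map d p) *v J w))"

definition covec_norm :: "real^'n^'n \<Rightarrow> real^'n \<Rightarrow> real" where
  "covec_norm G b = sqrt (b \<bullet> (matrix_inv G *v b))"

definition f_norm_finite :: "('m,'n::finite) chart set \<Rightarrow> (('m,'n) chart \<Rightarrow> real^'n \<Rightarrow> real^'n^'n)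
    \<Rightarrow> (real \<Rightarrow> real) \<Rightarrow> (('m,'n) chart \<Rightarrow> real^'n \<Rightarrow> real \<Rightarrow> real^'n) \<Rightarrow> bool" where
  "f_norm_finite A gc f bc \<longleftrightarrow>
     (\<exists>K. \<forall>c\<in>A. \<forall>x\<in>chart_img c. \<forall>v>0. covec_norm (gc c x) (bc c x v) / f v \<le> K)"

definition admissible_f :: "(real \<Rightarrow> real) \<Rightarrow> bool" where
  "admissible_f f \<longleftrightarrow>
     (\<forall>v>0. f v > 0) \<and>
     (\<forall>s t. 0 < s \<longrightarrow> s \<le> t \<longrightarrow> (\<lambda>t. 1 / f t) integrable_on {s..t}) \<and>
     (\<forall>v0>0. filterlim (\<lambda>v. integral {v0..v} (\<lambda>t. 1 / f t)) at_top at_top \<and>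
             filterlim (\<lambda>v. - integral {v..v0} (\<lambda>t. 1 / f t)) at_bot (at_right 0))"

end

theory Submission
  imports Defs
begin


lemma mixed_sym:
  fixes F Fs Ft Fts :: "real \<Rightarrow> real \<Rightarrow> real" and d :: real
  assumes d: "d > 0"
    and hs: "\<And>s t. \<bar>s\<bar> < d \<Longrightarrow> \<bar>t\<bar> < d \<Longrightarrow> ((\<lambda>s. F s t) has_real_derivative Fs s t) (at s)"
    and ht: "\<And>s t. \<bar>s\<bar> < d \<Longrightarrow> \<bar>t\<bar> < d \<Longrightarrow> ((\<lambda>t. F s t) has_real_derivative Ft s t) (at t)"
    and hts: "\<And>s t. \<bar>s\<bar> < d \<Longrightarrow> \<bar>t\<bar> < d \<Longrightarrow> ((\<lambda>s. Ft s t) has_real_derivative Fts s t) (at s)"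
    and cft: "continuous_on ({-d<..<d} \<times> {-d<..<d}) (\<lambda>(s,t). Ft s t)"
    and cfts: "continuous_on ({-d<..<d} \<times> {-d<..<d}) (\<lambda>(s,t). Fts s t)"
  shows "((\<lambda>t. Fs 0 t) has_real_derivative Fts 0 0) (at 0)"
proof -
  define a where "a = - d / 2"
  define b where "b = d / 2"
  have ab: "a < 0" "0 < b" "-d < a" "b < d" using d by (auto simp: a_def b_def)
  have ctsl: "continuous_on {a..b} (Ft s)" if "\<bar>s\<bar> < d" for s
  proof -
    have "continuous_on {a..b} (\<lambda>t. (\<lambda>(s,t). Ft s t) (s,t))"
      by (rule continuous_on_compose2[OF cft]) (use that ab in \<open>auto intro!: continuous_intros\<close>)
    then show ?thesis by simp
  qed
  have ftsl: "continuous_on {a..b} (Fts 0)"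
  proof -
    have "continuous_on {a..b} (\<lambda>t. (\<lambda>(s,t). Fts s t) (0,t))"
      by (rule continuous_on_compose2[OF cfts]) (use d ab in \<open>auto intro!: continuous_intros\<close>)
    then show ?thesis by simp
  qed
  have ftc: "F s t = F s a + integral {a..t} (Ft s)" if "\<bar>s\<bar> < d" "t \<in> {a..b}" for s t
  proof -
    have "(Ft s has_integral F s t - F s a) {a..t}"
    proof (rule fundamental_theorem_of_calculus)
      show "a \<le> t" using that by auto
      fix x assume "x \<in> {a..t}"
      then have "\<bar>x\<bar> < d" using that ab by auto
      then show "((\<lambda>t. F s t) has_vector_derivative Ft s x) (at x within {a..t})"
        using ht[OF \<open>\<bar>s\<bar> < d\<close>] by (simp add: has_real_derivative_iff_has_vector_derivative[symmetric] has_field_derivative_at_within)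
    qed
    then show ?thesis by (simp add: integral_unique)
  qed
  have key: "Fs 0 t = Fs 0 a + integral {a..t} (Fts 0)" if t: "t \<in> {a..b}" for t
  proof -
    have L: "((\<lambda>s. integral (cbox a t) (Ft s)) has_field_derivative integral (cbox a t) (Fts 0)) (at 0 within {-d<..<d})"
    proof (rule leibniz_rule_field_derivative)
      fix x u assume "x \<in> {-d<..<d}" "u \<in> cbox a t"
      then have "\<bar>x\<bar> < d" "\<bar>u\<bar> < d" using t ab by auto
      then show "((\<lambda>x. Ft x u) has_field_derivative Fts x u) (at x within {-d<..<d})"
        using hts has_field_derivative_at_within by blast
    next
      fix x :: real assume "x \<in> {-d<..<d}"
      then have "continuous_on {a..b} (Ft x)" using ctsl by auto
      then have "continuous_on {a..t} (Ft x)" by (rule continuous_on_subset) (use t in auto)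
      then show "Ft x integrable_on cbox a t" by (simp add: integrable_continuous_real)
    next
      show "continuous_on ({-d<..<d} \<times> cbox a t) (\<lambda>(x, t). Fts x t)"
        by (rule continuous_on_subset[OF cfts]) (use t ab in auto)
    qed (use d in auto)
    have L': "((\<lambda>s. F s a + integral {a..t} (Ft s)) has_field_derivative Fs 0 a + integral {a..t} (Fts 0)) (at 0)"
      apply (rule DERIV_add)
      using hs[of 0 a] ab d apply simp
      using L at_within_open[of 0 "{-d<..<d}"] d by simp
    have L'': "((\<lambda>s. F s t) has_field_derivative Fs 0 a + integral {a..t} (Fts 0)) (at 0)"
    proof (rule has_field_derivative_transform_within_open[OF L', of "{-d<..<d}"])
      fix x :: real assume "x \<in> {-d<..<d}"
      then have "\<bar>x\<bar> < d" by auto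
      from ftc[OF this t] show "F x a + integral {a..t} (Ft x) = F x t" by simp
    qed (use d in auto)
    have "((\<lambda>s. F s t) has_field_derivative Fs 0 t) (at 0)" using hs[of 0 t] t ab d by auto
    then show ?thesis using L'' DERIV_unique by blast
  qed
  have I: "((\<lambda>u. integral {a..u} (Fts 0)) has_field_derivative Fts 0 0) (at 0)"
    using integral_has_vector_derivative[OF ftsl, of 0] ab at_within_Icc_at[of a 0 b]
    by (simp add: has_real_derivative_iff_has_vector_derivative)
  have "((\<lambda>t. Fs 0 a + integral {a..t} (Fts 0)) has_field_derivative Fts 0 0) (at 0)"
    using DERIV_add[OF DERIV_const I] by simp
  then show ?thesis
  proof (rule has_field_derivative_transform_within_open[of _ _ _ "{a<..<b}"])
    fix x :: real assume "x \<in> {a<..<b}"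
    then have "x \<in> {a..b}" by auto
    from key[OF this] show "Fs 0 a + integral {a..x} (Fts 0) = Fs 0 x" by simp
  qed (use ab in auto)
qed



lemma smooth_Ck: "smooth_on S F \<Longrightarrow> Ck_on k S F" by (simp add: smooth_on_def)

lemma smooth_cont: "smooth_on S F \<Longrightarrow> continuous_on S F"
  using smooth_Ck[of S F 0] by simp

lemma smooth_diff:
  assumes "smooth_on S F" "open S" "z \<in> S" shows "F differentiable (at z)"
proof -
  have "F differentiable_on S" using smooth_Ck[OF assms(1), of 1] by simp
  then show ?thesis using assms(2,3) differentiable_on_eq_differentiable_at by blast
qed

lemma smooth_partial:
  assumes "smooth_on S F" "e \<in> Basis" shows "smooth_on S (\<lambda>x. frechet_derivative F (at x) e)"
  unfolding smooth_on_def
proof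
  fix k show "Ck_on k S (\<lambda>x. frechet_derivative F (at x) e)"
    using smooth_Ck[OF assms(1), of "Suc k"] assms(2) by simp
qed

lemma fd_works: "F differentiable (at z) \<Longrightarrow> (F has_derivative frechet_derivative F (at z)) (at z)"
  by (simp add: frechet_derivative_works)

lemma line_deriv:
  fixes F :: "'a::real_normed_vector \<Rightarrow> real"
  assumes "F differentiable (at (p + s *\<^sub>R q))"
  shows "((\<lambda>s. F (p + s *\<^sub>R q)) has_real_derivative frechet_derivative F (at (p + s *\<^sub>R q)) q) (at s)"
proof -
  let ?D = "frechet_derivative F (at (p + s *\<^sub>R q))"
  have D: "(F has_derivative ?D) (at (p + s *\<^sub>R q))" using assms fd_works by blast
  have L: "((\<lambda>s. p + s *\<^sub>R q) has_derivative (\<lambda>h. h *\<^sub>R q)) (at s)"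
    by (auto intro!: derivative_eq_intros)
  have 1: "((\<lambda>s. F (p + s *\<^sub>R q)) has_derivative (\<lambda>h. ?D (h *\<^sub>R q))) (at s)"
    using has_derivative_compose[OF L D] by simp
  have lin: "linear ?D" using D has_derivative_linear by blast
  have "(\<lambda>h. ?D (h *\<^sub>R q)) = (*) (?D q)"
    by (rule ext) (simp add: linear_scale[OF lin] mult.commute)
  then show ?thesis using 1 unfolding has_field_derivative_def by simp
qed

lemma lin_split:
  fixes D :: "'a::real_vector \<times> real \<Rightarrow> real"
  assumes "linear D" shows "D (u, \<beta>) = D (u, 0) + \<beta> * D (0, 1)"
proof -
  have e3: "(u, \<beta>) = (u, 0) + \<beta> *\<^sub>R (0, 1)" by simp
  have "D (u, \<beta>) = D ((u, 0) + \<beta> *\<^sub>R (0, 1))" by (rule arg_cong[where f=D, OF e3])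
  also have "\<dots> = D (u,0) + D (\<beta> *\<^sub>R (0,1))" by (rule linear_add[OF assms])
  also have "D (\<beta> *\<^sub>R (0,1)) = \<beta> * D (0,1)"
    using linear_scale[OF assms, of \<beta> "(0,1)"] by (simp only: real_scaleR_def)
  finally show ?thesis .
qed

lemma basis_v: "((0::real^'n), (1::real)) \<in> Basis" by (simp add: Basis_prod_def)
lemma basis_x: "((axis i (1::real))::real^'n, (0::real)) \<in> Basis" by (auto simp: Basis_prod_def)

lemma pdv_eq: "pdv F = (\<lambda>z. frechet_derivative F (at z) (0,1))" by (rule ext) (simp add: pdv_def)
lemma pdx_eq: "pdx i F = (\<lambda>z. frechet_derivative F (at z) (axis i 1, 0))" by (rule ext) (simp add: pdx_def)

lemma basis_vec_cases:
  assumes "(b::real^'n) \<in> Basis" obtains i where "b = axis i 1"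
  using assms unfolding Basis_vec_def by auto

locale chartloc =
  fixes c :: "('m, 'n::finite) chart"
    and a :: "'m \<Rightarrow> real \<Rightarrow> real"
    and bc :: "('m,'n) chart \<Rightarrow> real^'n \<Rightarrow> real \<Rightarrow> real^'n"
    and V W :: "'m \<Rightarrow> real \<Rightarrow> real"
  assumes img_open: "open (chart_img c)"
    and a_sm: "smooth_on (cdom c) (loc c a)"
    and W_sm: "smooth_on (cdom c) (loc c W)"
    and b_sm: "smooth_on (cdom c) (\<lambda>(x,v). bc c x v)"
    and a_eq: "\<forall>z\<in>cdom c. \<forall>i. pdx i (loc c a) z + bcomp bc c i z * pdv (loc c a) z =
        pdv (bcomp bc c i) z * loc c a z"
    and V_pos: "\<forall>p. \<forall>w>0. V p w > 0"
    and V_pfaff: "\<forall>x\<in>chart_img c. \<forall>w>0.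
        ((\<lambda>y. V (chart_inv c y) w) has_derivative
           (\<lambda>u. bc c x (V (chart_inv c x) w) \<bullet> u)) (at x)"
    and W_def: "\<forall>p. \<forall>v>0. W p v > 0 \<and> V p (W p v) = v"
    and W_v_nz: "\<forall>p. \<forall>v>0. deriv (W p) v \<noteq> 0"
begin

abbreviation "Wl \<equiv> loc c W"
abbreviation "al \<equiv> loc c a"
abbreviation "Wv \<equiv> pdv (loc c W)"
abbreviation "bl i \<equiv> bcomp bc c i"

lemma cdom_open: "open (cdom c)"
  unfolding cdom_def using img_open by (simp add: open_Times)

lemma mem_cdom: "(x,v) \<in> cdom c \<longleftrightarrow> x \<in> chart_img c \<and> v > 0" by (simp add: cdom_def)

lemma Wl_diff: "z \<in> cdom c \<Longrightarrow> Wl differentiable (at z)"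
  using smooth_diff[OF W_sm cdom_open] .

lemma al_diff: "z \<in> cdom c \<Longrightarrow> al differentiable (at z)"
  using smooth_diff[OF a_sm cdom_open] .

lemma Wv_sm: "smooth_on (cdom c) Wv"
  unfolding pdv_eq by (rule smooth_partial[OF W_sm basis_v])

lemma Wv_diff: "z \<in> cdom c \<Longrightarrow> Wv differentiable (at z)"
  using smooth_diff[OF Wv_sm cdom_open] .

lemma Wvx_sm: "smooth_on (cdom c) (pdx i Wv)"
  unfolding pdx_eq[of i Wv] by (rule smooth_partial[OF Wv_sm basis_x])

lemma bl_diff: assumes "z \<in> cdom c" shows "bl i differentiable (at z)"
proof -
  have "(\<lambda>(x,v). bc c x v) differentiable (at z)" using smooth_diff[OF b_sm cdom_open assms] .
  then obtain D where D: "((\<lambda>(x,v). bc c x v) has_derivative D) (at z)" unfolding differentiable_def by blast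
  have "((\<lambda>z. (\<lambda>(x,v). bc c x v) z $ i) has_derivative (\<lambda>h. D h $ i)) (at z)"
    by (rule bounded_linear.has_derivative[OF bounded_linear_vec_nth D])
  moreover have "(\<lambda>z. (\<lambda>(x,v). bc c x v) z $ i) = bl i"
    by (rule ext) (simp add: bcomp_def case_prod_beta)
  ultimately show ?thesis unfolding differentiable_def by auto
qed

lemma Wv_deriv:
  assumes "y \<in> chart_img c" "v > 0"
  shows "((\<lambda>t. W (chart_inv c y) t) has_real_derivative Wv (y,v)) (at v)"
    and "deriv (W (chart_inv c y)) v = Wv (y,v)"
proof -
  have "((\<lambda>s. Wl ((y,0) + s *\<^sub>R (0,1))) has_real_derivative
      frechet_derivative Wl (at ((y,0) + v *\<^sub>R (0,1))) (0,1)) (at v)"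
    by (rule line_deriv) (simp add: Wl_diff mem_cdom assms)
  then show 1: "((\<lambda>t. W (chart_inv c y) t) has_real_derivative Wv (y,v)) (at v)"
    by (simp add: loc_def pdv_def)
  show "deriv (W (chart_inv c y)) v = Wv (y,v)"
    using DERIV_imp_deriv[OF 1] by simp
qed

lemma ivt_nbhd:
  assumes x0: "x0 \<in> chart_img c" and v0: "v0 > 0"
  shows "\<exists>r>0. ball x0 r \<subseteq> chart_img c \<and>
    (\<forall>x\<in>ball x0 r. Wl (x, V (chart_inv c x) (W (chart_inv c x0) v0)) = W (chart_inv c x0) v0)"
proof -
  define w where "w = W (chart_inv c x0) v0"
  define g where "g = (\<lambda>t. W (chart_inv c x0) t)"
  have gd: "(g has_real_derivative Wv (x0,v0)) (at v0)" unfolding g_def by (rule Wv_deriv(1)[OF x0 v0])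
  have nz: "Wv (x0,v0) \<noteq> 0" using W_v_nz Wv_deriv(2)[OF x0 v0] v0 by metis
  have gv0: "g v0 = w" by (simp add: g_def w_def)
  obtain e where e: "0 < e" "e < v0" "(g (v0 - e) - w) * (g (v0 + e) - w) < 0"
  proof (cases "Wv (x0,v0) > 0")
    case True
    obtain d1 where d1: "d1>0" "\<forall>h>0. h < d1 \<longrightarrow> g v0 < g (v0 + h)" using DERIV_pos_inc_right[OF gd True] by blast
    obtain d2 where d2: "d2>0" "\<forall>h>0. h < d2 \<longrightarrow> g (v0 - h) < g v0" using DERIV_pos_inc_left[OF gd True] by blast
    define e where "e = min (min d1 d2) v0 / 2"
    have ee: "0<e" "e<d1" "e<d2" "e<v0" using d1 d2 v0 by (auto simp: e_def)
    then have "g (v0 - e) < w" "w < g (v0+e)" using d1 d2 gv0 by auto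
    then have "(g (v0 - e) - w) * (g (v0 + e) - w) < 0" by (simp add: mult_neg_pos)
    then show ?thesis using that ee by blast
  next
    case False
    then have neg: "Wv (x0,v0) < 0" using nz by linarith
    obtain d1 where d1: "d1>0" "\<forall>h>0. h < d1 \<longrightarrow> g v0 > g (v0 + h)" using DERIV_neg_dec_right[OF gd neg] by blast
    obtain d2 where d2: "d2>0" "\<forall>h>0. h < d2 \<longrightarrow> g v0 < g (v0 - h)" using DERIV_neg_dec_left[OF gd neg] by blast
    define e where "e = min (min d1 d2) v0 / 2"
    have ee: "0<e" "e<d1" "e<d2" "e<v0" using d1 d2 v0 by (auto simp: e_def)
    then have "g (v0 - e) > w" "w > g (v0+e)" using d1 d2 gv0 by auto
    then have "(g (v0 - e) - w) * (g (v0 + e) - w) < 0" by (simp add: mult_pos_neg)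
    then show ?thesis using that ee by blast
  qed
  define h where "h = (\<lambda>x. (Wl (x, v0 - e) - w) * (Wl (x, v0 + e) - w))"
  have hx0: "h x0 < 0" using e by (simp add: h_def g_def loc_def)
  have cs: "continuous (at x0) (\<lambda>x. Wl (x, t))" if tpos: "t > 0" for t
  proof -
    have "(x0,t) \<in> cdom c" using x0 tpos by (simp add: mem_cdom)
    then obtain D where D: "(Wl has_derivative D) (at (x0, t))"
      using Wl_diff unfolding differentiable_def by blast
    have P: "((\<lambda>x. (x, t)) has_derivative (\<lambda>h. (h, 0))) (at x0)"
      by (auto intro!: derivative_eq_intros)
    have "((\<lambda>x. Wl (x, t)) has_derivative (\<lambda>h. D (h, 0))) (at x0)"
      using has_derivative_compose[OF P D] by simp
    then show ?thesis by (rule has_derivative_continuous)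
  qed
  have hc: "continuous (at x0) h"
    unfolding h_def using e by (intro continuous_intros cs) auto
  obtain r1 where r1: "r1 > 0" "\<forall>x. dist x x0 < r1 \<longrightarrow> h x < 0"
  proof -
    from hc[unfolded continuous_at_eps_delta, rule_format, of "- h x0"] hx0
    obtain d where "d > 0" "\<forall>x. dist x x0 < d \<longrightarrow> dist (h x) (h x0) < - h x0" by auto
    then have "\<forall>x. dist x x0 < d \<longrightarrow> h x < 0" by (auto simp: dist_real_def)
    then show ?thesis using that \<open>d > 0\<close> by blast
  qed
  obtain r2 where r2: "r2 > 0" "ball x0 r2 \<subseteq> chart_img c"
    using img_open x0 open_contains_ball by blast
  define r where "r = min r1 r2"
  have "r > 0" using r1 r2 by (simp add: r_def)
  moreover have "ball x0 r \<subseteq> chart_img c" using r2 by (auto simp: r_def)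
  moreover have "Wl (x, V (chart_inv c x) w) = w" if x: "x \<in> ball x0 r" for x
  proof -
    have xi: "x \<in> chart_img c" using x r2 by (auto simp: r_def)
    have hx: "h x < 0" using x r1 by (auto simp: r_def dist_commute)
    let ?k = "W (chart_inv c x)"
    have kc: "continuous_on {v0-e..v0+e} ?k"
    proof (rule continuous_at_imp_continuous_on, intro ballI)
      fix t assume "t \<in> {v0-e..v0+e}"
      then have "t > 0" using e by auto
      from DERIV_isCont[OF Wv_deriv(1)[OF xi this]] show "isCont ?k t" by simp
    qed
    have hx': "(?k (v0 - e) - w) * (?k (v0 + e) - w) < 0" using hx by (simp add: h_def loc_def)
    have "\<exists>t. v0 - e \<le> t \<and> t \<le> v0 + e \<and> ?k t = w"
    proof (cases "?k (v0 - e) < w")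
      case True
      then have "?k (v0 + e) > w" using hx' by (simp add: mult_less_0_iff)
      then show ?thesis using IVT'[of ?k "v0-e" w "v0+e", OF _ _ _ kc] True e by auto
    next
      case False
      then have "?k (v0 - e) > w" "?k (v0 + e) < w" using hx' by (auto simp: mult_less_0_iff)
      then show ?thesis using IVT2'[of ?k "v0+e" w "v0-e", OF _ _ _ kc] e by auto
    qed
    then obtain t where t: "v0 - e \<le> t" "?k t = w" by blast
    have "t > 0" using t e by auto
    then have "V (chart_inv c x) w = t" using W_def t by metis
    then show ?thesis using t by (simp add: loc_def)
  qed
  ultimately show ?thesis unfolding w_def by blast
qed

lemma ident1:
  assumes z: "z \<in> cdom c" shows "pdx i Wl z + bl i z * Wv z = 0"
proof -
  obtain x0 v0 where zz: "z = (x0, v0)" by (cases z)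
  have x0: "x0 \<in> chart_img c" and v0: "v0 > 0" using z zz by (auto simp: mem_cdom)
  define w where "w = W (chart_inv c x0) v0"
  have w: "w > 0" "V (chart_inv c x0) w = v0" using W_def v0 by (auto simp: w_def)
  define B where "B = bc c x0 v0"
  have P: "((\<lambda>y. (y, V (chart_inv c y) w)) has_derivative (\<lambda>u. (u, B \<bullet> u))) (at x0)"
    using has_derivative_Pair[OF has_derivative_ident V_pfaff[rule_format, OF x0 w(1)]] w(2)
    by (simp add: B_def)
  let ?D = "frechet_derivative Wl (at z)"
  have D: "(Wl has_derivative ?D) (at ((\<lambda>y. (y, V (chart_inv c y) w)) x0))"
    using fd_works[OF Wl_diff[OF z]] w(2) zz by simp
  have 1: "((\<lambda>y. Wl (y, V (chart_inv c y) w)) has_derivative (\<lambda>u. ?D (u, B \<bullet> u))) (at x0)"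
    using has_derivative_compose[OF P D] by simp
  obtain r where r: "r > 0" "\<forall>x\<in>ball x0 r. Wl (x, V (chart_inv c x) w) = w"
    using ivt_nbhd[OF x0 v0] unfolding w_def by blast
  have 2: "((\<lambda>y. Wl (y, V (chart_inv c y) w)) has_derivative (\<lambda>h. 0)) (at x0)"
    by (rule has_derivative_transform_within_open[OF has_derivative_const[of w] open_ball[of x0 r]])
       (use r in auto)
  have "(\<lambda>u. ?D (u, B \<bullet> u)) = (\<lambda>h. 0)" by (rule has_derivative_unique[OF 1 2])
  then have "?D (axis i 1, B \<bullet> axis i 1) = 0" by metis
  then have "?D (axis i 1, B $ i) = 0" by (simp add: inner_axis)
  moreover have "linear ?D" using fd_works[OF Wl_diff[OF z]] has_derivative_linear by blast
  ultimately have "?D (axis i 1, 0) + B $ i * ?D (0, 1) = 0" using lin_split by metis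
  moreover have "bl i z = B $ i" by (simp add: bcomp_def B_def zz)
  ultimately show ?thesis by (simp add: pdx_def pdv_def)
qed

lemma ident2:
  assumes z: "z \<in> cdom c"
  shows "pdx i Wv z + bl i z * pdv Wv z = - (pdv (bl i) z * Wv z)"
proof -
  obtain x0 v0 where zz: "z = (x0, v0)" by (cases z)
  have x0: "x0 \<in> chart_img c" and v0: "v0 > 0" using z zz by (auto simp: mem_cdom)
  obtain r where r: "r > 0" "ball z r \<subseteq> cdom c" using cdom_open z open_contains_ball by blast
  define d where "d = r / 2"
  have d: "d > 0" using r by (simp add: d_def)
  define p where "p = (\<lambda>s t. (x0 + s *\<^sub>R axis i (1::real), v0 + t))"
  have pin: "p s t \<in> cdom c" if "\<bar>s\<bar> < d" "\<bar>t\<bar> < d" for s t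
  proof -
    have "dist z (p s t) = norm ((- (s *\<^sub>R axis i (1::real))), - t)"
      by (simp add: zz p_def dist_norm)
    also have "\<dots> \<le> norm (- (s *\<^sub>R axis i (1::real))) + norm (- t)" by (rule norm_Pair_le)
    also have "\<dots> = \<bar>s\<bar> + \<bar>t\<bar>" by simp
    also have "\<dots> < r" using that by (simp add: d_def)
    finally show ?thesis using r by auto
  qed
  have hs: "((\<lambda>s. Wl (p s t)) has_real_derivative pdx i Wl (p s t)) (at s)"
    if "\<bar>s\<bar> < d" "\<bar>t\<bar> < d" for s t
  proof -
    have eq: "p s' t = (x0, v0 + t) + s' *\<^sub>R (axis i 1, 0)" for s' by (simp add: p_def)
    have "((\<lambda>s. Wl ((x0, v0 + t) + s *\<^sub>R (axis i 1, 0))) has_real_derivative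
        frechet_derivative Wl (at ((x0, v0 + t) + s *\<^sub>R (axis i 1, 0))) (axis i 1, 0)) (at s)"
      by (rule line_deriv) (use Wl_diff pin[OF that] eq in metis)
    then show ?thesis unfolding eq[symmetric] pdx_def .
  qed
  have ht: "((\<lambda>t. Wl (p s t)) has_real_derivative Wv (p s t)) (at t)"
    if "\<bar>s\<bar> < d" "\<bar>t\<bar> < d" for s t
  proof -
    have eq: "p s t' = (x0 + s *\<^sub>R axis i 1, v0) + t' *\<^sub>R (0, 1)" for t' by (simp add: p_def)
    have "((\<lambda>t. Wl ((x0 + s *\<^sub>R axis i 1, v0) + t *\<^sub>R (0, 1))) has_real_derivative
        frechet_derivative Wl (at ((x0 + s *\<^sub>R axis i 1, v0) + t *\<^sub>R (0, 1))) (0, 1)) (at t)"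
      by (rule line_deriv) (use Wl_diff pin[OF that] eq in metis)
    then show ?thesis unfolding eq[symmetric] pdv_def .
  qed
  have hts: "((\<lambda>s. Wv (p s t)) has_real_derivative pdx i Wv (p s t)) (at s)"
    if "\<bar>s\<bar> < d" "\<bar>t\<bar> < d" for s t
  proof -
    have eq: "p s' t = (x0, v0 + t) + s' *\<^sub>R (axis i 1, 0)" for s' by (simp add: p_def)
    have "((\<lambda>s. Wv ((x0, v0 + t) + s *\<^sub>R (axis i 1, 0))) has_real_derivative
        frechet_derivative Wv (at ((x0, v0 + t) + s *\<^sub>R (axis i 1, 0))) (axis i 1, 0)) (at s)"
      by (rule line_deriv) (use Wv_diff pin[OF that] eq in metis)
    then show ?thesis unfolding eq[symmetric] pdx_def .
  qed
  let ?S = "{-d<..<d} \<times> {-d<..<d}"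
  have pc: "continuous_on ?S (\<lambda>x. p (fst x) (snd x))"
    unfolding p_def by (intro continuous_intros)
  have pimg: "(\<lambda>x. p (fst x) (snd x)) ` ?S \<subseteq> cdom c"
    using pin by auto
  have cft: "continuous_on ?S (\<lambda>(s,t). Wv (p s t))"
    using continuous_on_compose2[OF smooth_cont[OF Wv_sm] pc pimg] by (simp add: case_prod_beta)
  have cfts: "continuous_on ?S (\<lambda>(s,t). pdx i Wv (p s t))"
    using continuous_on_compose2[OF smooth_cont[OF Wvx_sm] pc pimg] by (simp add: case_prod_beta)
  have M: "((\<lambda>t. pdx i Wl (p 0 t)) has_real_derivative pdx i Wv (p 0 0)) (at 0)"
    by (rule mixed_sym[OF d hs ht hts cft cfts])
  have p0: "p 0 t = (x0, v0 + t)" for t by (simp add: p_def)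
  have M': "((\<lambda>t. pdx i Wl (x0, v0 + t)) has_real_derivative pdx i Wv z) (at 0)"
    using M by (simp add: p0 zz)
  have lv: "((\<lambda>t. F (x0, v0 + t)) has_real_derivative pdv F z) (at 0)"
    if "F differentiable (at z)" for F :: "(real^'n) \<times> real \<Rightarrow> real"
  proof -
    have eq: "(x0, v0 + t) = (x0, v0) + t *\<^sub>R (0, 1)" for t by simp
    have "((\<lambda>t. F ((x0, v0) + t *\<^sub>R (0, 1))) has_real_derivative
        frechet_derivative F (at ((x0, v0) + 0 *\<^sub>R (0, 1))) (0, 1)) (at 0)"
      by (rule line_deriv) (use that zz in simp)
    then show ?thesis unfolding eq[symmetric] pdv_def zz by simp
  qed
  have R: "((\<lambda>t. - (bl i (x0, v0 + t) * Wv (x0, v0 + t))) has_real_derivative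
      - (pdv (bl i) z * Wv z + pdv Wv z * bl i z)) (at 0)"
    using DERIV_minus[OF DERIV_mult[OF lv[OF bl_diff[OF z]] lv[OF Wv_diff[OF z]]]] zz by simp
  have R': "((\<lambda>t. pdx i Wl (x0, v0 + t)) has_real_derivative
      - (pdv (bl i) z * Wv z + pdv Wv z * bl i z)) (at 0)"
  proof (rule has_field_derivative_transform_within_open[OF R, of "{-v0<..}"])
    fix t assume "t \<in> {-v0<..}"
    then have "(x0, v0 + t) \<in> cdom c" using x0 by (simp add: mem_cdom)
    from ident1[OF this, of i] show "- (bl i (x0, v0 + t) * Wv (x0, v0 + t)) = pdx i Wl (x0, v0 + t)"
      by linarith
  qed (use v0 in auto)
  have "pdx i Wv z = - (pdv (bl i) z * Wv z + pdv Wv z * bl i z)"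
    using DERIV_unique[OF M' R'] .
  then show ?thesis by (simp add: algebra_simps)
qed

lemma G_deriv:
  assumes y: "y \<in> chart_img c" and k: "k > 0"
  shows "((\<lambda>y. al (y, V (chart_inv c y) k) * Wv (y, V (chart_inv c y) k)) has_derivative (\<lambda>h. 0)) (at y)"
proof -
  define vv where "vv = V (chart_inv c y) k"
  have vv: "vv > 0" using V_pos k by (simp add: vv_def)
  define z where "z = (y, vv)"
  have z: "z \<in> cdom c" using y vv by (simp add: z_def mem_cdom)
  define B where "B = bc c y vv"
  have P: "((\<lambda>y. (y, V (chart_inv c y) k)) has_derivative (\<lambda>u. (u, B \<bullet> u))) (at y)"
    using has_derivative_Pair[OF has_derivative_ident V_pfaff[rule_format, OF y k]]
    by (simp add: B_def vv_def)
  let ?Da = "frechet_derivative al (at z)"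
  let ?DW = "frechet_derivative Wv (at z)"
  have Da: "(al has_derivative ?Da) (at ((\<lambda>y. (y, V (chart_inv c y) k)) y))"
    using fd_works[OF al_diff[OF z]] by (simp add: z_def vv_def)
  have DW: "(Wv has_derivative ?DW) (at ((\<lambda>y. (y, V (chart_inv c y) k)) y))"
    using fd_works[OF Wv_diff[OF z]] by (simp add: z_def vv_def)
  have 1: "((\<lambda>y. al (y, V (chart_inv c y) k)) has_derivative (\<lambda>u. ?Da (u, B \<bullet> u))) (at y)"
    using has_derivative_compose[OF P Da] by simp
  have 2: "((\<lambda>y. Wv (y, V (chart_inv c y) k)) has_derivative (\<lambda>u. ?DW (u, B \<bullet> u))) (at y)"
    using has_derivative_compose[OF P DW] by simp
  have 3: "((\<lambda>y. al (y, V (chart_inv c y) k) * Wv (y, V (chart_inv c y) k)) has_derivative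
     (\<lambda>h. al z * ?DW (h, B \<bullet> h) + ?Da (h, B \<bullet> h) * Wv z)) (at y)"
    using has_derivative_mult[OF 1 2] by (simp add: z_def vv_def)
  have linDa: "linear ?Da" using fd_works[OF al_diff[OF z]] has_derivative_linear by blast
  have linDW: "linear ?DW" using fd_works[OF Wv_diff[OF z]] has_derivative_linear by blast
  have "(\<lambda>h. al z * ?DW (h, B \<bullet> h) + ?Da (h, B \<bullet> h) * Wv z) = (\<lambda>h. 0)"
  proof (rule linear_eq_stdbasis)
    show "linear (\<lambda>h. al z * ?DW (h, B \<bullet> h) + ?Da (h, B \<bullet> h) * Wv z)"
      using 3 has_derivative_linear by blast
    show "linear (\<lambda>h::real^'n. 0::real)" by (simp add: linear_zero)
    fix b :: "real^'n" assume "b \<in> Basis"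
    then obtain i where b: "b = axis i 1" by (rule basis_vec_cases)
    have bi: "bl i z = B $ i" by (simp add: bcomp_def B_def z_def)
    have e1: "?Da (b, B \<bullet> b) = pdx i al z + bl i z * pdv al z"
      using lin_split[OF linDa, of "axis i 1" "B $ i"] by (simp add: b inner_axis bi pdx_def pdv_def)
    have e2: "?DW (b, B \<bullet> b) = pdx i Wv z + bl i z * pdv Wv z"
      using lin_split[OF linDW, of "axis i 1" "B $ i"] by (simp add: b inner_axis bi pdx_def pdv_def)
    have ae: "pdx i al z + bl i z * pdv al z = pdv (bl i) z * al z" using a_eq z by blast
    show "al z * ?DW (b, B \<bullet> b) + ?Da (b, B \<bullet> b) * Wv z = 0"
      unfolding e1 e2 ae ident2[OF z] by (simp add: algebra_simps)
  qed
  then show ?thesis using 3 by simp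
qed

end


theorem lemma5p1:
  fixes A :: "('m::{t2_space, second_countable_topology}, 'n::finite) chart set"
    and gc :: "('m,'n) chart \<Rightarrow> real^'n \<Rightarrow> real^'n^'n"
    and a :: "'m \<Rightarrow> real \<Rightarrow> real"
    and bc :: "('m,'n) chart \<Rightarrow> real^'n \<Rightarrow> real \<Rightarrow> real^'n"
    and f :: "real \<Rightarrow> real"
    and p0 :: 'm
    and V W :: "'m \<Rightarrow> real \<Rightarrow> real"
  assumes atlas: "smooth_atlas A"
    and conn: "connected (UNIV :: 'm set)"
    and simply_conn: "simply_connected (UNIV :: 'm set)"
    and metric: "riemannian_metric A gc"
    and a_smooth: "smooth_fun A a"
    and b_field: "covector_field A bc"
    and b_eq: "\<forall>c\<in>A. \<forall>z\<in>cdom c. \<forall>i j.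
        pdx j (bcomp bc c i) z + bcomp bc c j z * pdv (bcomp bc c i) z =
        pdx i (bcomp bc c j) z + bcomp bc c i z * pdv (bcomp bc c j) z"
    and a_eq: "\<forall>c\<in>A. \<forall>z\<in>cdom c. \<forall>i.
        pdx i (loc c a) z + bcomp bc c i z * pdv (loc c a) z =
        pdv (bcomp bc c i) z * loc c a z"
    and f_adm: "admissible_f f"
    and b_bounded: "f_norm_finite A gc f bc"
    and V_pos: "\<forall>p. \<forall>w>0. V p w > 0"
    and V_init: "\<forall>w>0. V p0 w = w"
    and V_pfaff: "\<forall>c\<in>A. \<forall>x\<in>chart_img c. \<forall>w>0.
        ((\<lambda>y. V (chart_inv c y) w) has_derivative
           (\<lambda>u. bc c x (V (chart_inv c x) w) \<bullet> u)) (at x)"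
    and W_def: "\<forall>p. \<forall>v>0. W p v > 0 \<and> V p (W p v) = v"
    and W_smooth: "smooth_fun A W"
    and W_v_nz: "\<forall>p. \<forall>v>0. deriv (W p) v \<noteq> 0"
    and levels_connected: "\<forall>k. connected {(p, v). v > 0 \<and> W p v = k}"
  shows "\<forall>q0 v0 q1 v1. v0 > 0 \<longrightarrow> v1 > 0 \<longrightarrow> W q0 v0 = W q1 v1 \<longrightarrow>
           a q0 v0 * deriv (W q0) v0 = a q1 v1 * deriv (W q1) v1"
proof (intro allI impI)
  fix q0 q1 :: 'm and v0 v1 :: real
  assume v0: "v0 > 0" and v1: "v1 > 0" and eqk: "W q0 v0 = W q1 v1"
  define k where "k = W q0 v0"
  have kpos: "k > 0" using W_def v0 by (simp add: k_def)
  define L where "L = {(p, v). v > 0 \<and> W p v = k}"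
  define Wt where "Wt = (\<lambda>(p,v). a p v * deriv (W p) v)"
  have cL: "connected L" using levels_connected by (simp add: L_def)
  have cf: "open (chart_dom c) \<and> open (chart_img c) \<and>
      homeomorphism (chart_dom c) (chart_img c) (chart_map c) (chart_inv c)" if "c \<in> A" for c
    using atlas that unfolding smooth_atlas_def by blast
  have cover: "\<exists>c\<in>A. p \<in> chart_dom c" for p
  proof -
    have "p \<in> (\<Union>c\<in>A. chart_dom c)" using atlas unfolding smooth_atlas_def by simp
    then show ?thesis by blast
  qed
  have loc_ok: "chartloc c a bc V W" if c: "c \<in> A" for c
  proof
    show "open (chart_img c)" using cf[OF c] by blast
    show "smooth_on (cdom c) (loc c a)" using a_smooth c unfolding smooth_fun_def by blast
    show "smooth_on (cdom c) (loc c W)" using W_smooth c unfolding smooth_fun_def by blast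
    show "smooth_on (cdom c) (\<lambda>(x,v). bc c x v)" using b_field c unfolding covector_field_def by blast
    show "\<forall>z\<in>cdom c. \<forall>i. pdx i (loc c a) z + bcomp bc c i z * pdv (loc c a) z =
        pdv (bcomp bc c i) z * loc c a z" using a_eq c by blast
    show "\<forall>p. \<forall>w>0. V p w > 0" by (rule V_pos)
    show "\<forall>x\<in>chart_img c. \<forall>w>0.
        ((\<lambda>y. V (chart_inv c y) w) has_derivative
           (\<lambda>u. bc c x (V (chart_inv c x) w) \<bullet> u)) (at x)" using V_pfaff c by blast
    show "\<forall>p. \<forall>v>0. W p v > 0 \<and> V p (W p v) = v" by (rule W_def)
    show "\<forall>p. \<forall>v>0. deriv (W p) v \<noteq> 0" by (rule W_v_nz)
  qed
  have "Wt constant_on L"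
  proof (rule locally_constant_imp_constant[OF cL])
    fix pv assume pvL: "pv \<in> L"
    obtain p v where pv: "pv = (p, v)" by (cases pv)
    have v: "v > 0" "W p v = k" using pvL pv by (auto simp: L_def)
    obtain c where c: "c \<in> A" "p \<in> chart_dom c" using cover by blast
    interpret I: chartloc c a bc V W by (rule loc_ok[OF c(1)])
    have dopen: "open (chart_dom c)" and iopen: "open (chart_img c)"
      and hom: "homeomorphism (chart_dom c) (chart_img c) (chart_map c) (chart_inv c)"
      using cf[OF c(1)] by auto
    have inv1: "\<And>q. q \<in> chart_dom c \<Longrightarrow> chart_inv c (chart_map c q) = q"
      and img1: "\<And>q. q \<in> chart_dom c \<Longrightarrow> chart_map c q \<in> chart_img c"
      and mapc: "continuous_on (chart_dom c) (chart_map c)"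
      using hom unfolding homeomorphism_def by auto
    define x0 where "x0 = chart_map c p"
    have x0: "x0 \<in> chart_img c" using img1 c(2) by (simp add: x0_def)
    obtain r where r: "r > 0" "ball x0 r \<subseteq> chart_img c" using iopen x0 open_contains_ball by blast
    define G where "G = (\<lambda>y. loc c a (y, V (chart_inv c y) k) * pdv (loc c W) (y, V (chart_inv c y) k))"
    have "\<exists>C. \<forall>y\<in>ball x0 r. G y = C"
    proof (rule has_derivative_zero_constant[OF convex_ball])
      fix y assume "y \<in> ball x0 r"
      then have "y \<in> chart_img c" using r by auto
      from I.G_deriv[OF this kpos] show "(G has_derivative (\<lambda>h. 0)) (at y within ball x0 r)"
        unfolding G_def by (rule has_derivative_at_withinI)
    qed
    then obtain C where C: "\<forall>y\<in>ball x0 r. G y = C" by blast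
    define Od where "Od = chart_map c -` ball x0 r \<inter> chart_dom c"
    have Odopen: "open Od" using mapc dopen unfolding Od_def continuous_on_open_vimage[OF dopen] by blast
    have key: "Wt (q, u) = C" if "(q, u) \<in> L" "q \<in> Od" for q u
    proof -
      have u: "u > 0" "W q u = k" using that by (auto simp: L_def)
      have q: "q \<in> chart_dom c" "chart_map c q \<in> ball x0 r" using that by (auto simp: Od_def)
      define y where "y = chart_map c q"
      have y: "y \<in> chart_img c" "chart_inv c y = q" using img1 inv1 q by (auto simp: y_def)
      have Vk: "V q k = u" using W_def u by metis
      have "G y = a q u * deriv (W q) u"
        using I.Wv_deriv(2)[OF y(1) u(1)] by (simp add: G_def y Vk loc_def)
      then show ?thesis using C q by (simp add: Wt_def y_def)
    qed
    show "\<exists>T. openin (top_of_set L) T \<and> pv \<in> T \<and> (\<forall>x\<in>T. Wt x = Wt pv)"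
    proof (intro exI conjI)
      show "openin (top_of_set L) (L \<inter> (Od \<times> UNIV))"
        using Odopen by (auto simp: openin_open intro!: exI[of _ "Od \<times> UNIV"] open_Times)
      have "p \<in> Od" using c(2) r by (simp add: Od_def x0_def)
      then show "pv \<in> L \<inter> (Od \<times> UNIV)" using pvL pv by auto
      have "Wt pv = C" using key pvL pv \<open>p \<in> Od\<close> by auto
      then show "\<forall>x\<in>L \<inter> (Od \<times> UNIV). Wt x = Wt pv" using key by auto
    qed
  qed
  then obtain C where "\<forall>x\<in>L. Wt x = C" unfolding constant_on_def by blast
  moreover have "(q0, v0) \<in> L" "(q1, v1) \<in> L" using v0 v1 eqk by (auto simp: L_def k_def)
  ultimately show "a q0 v0 * deriv (W q0) v0 = a q1 v1 * deriv (W q1) v1"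
    by (metis (no_types, lifting) Wt_def case_prod_conv)
qed

end
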